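(* For every integer $n\geq1$, let $f_n(x)=x^n(x-2)-2$ and $g_n(x)=x^n(x-2)+2$. Then $f_n$ and $g_n$ are irreducible in $\mathbb Q[x]$, separable, do not have $0$ as a root, and have no common root. *)

theory Defs
  imports "HOL-Computational_Algebra.Computational_Algebra" Complex_Main
begin

definition f_poly :: "nat \<Rightarrow> rat poly" where
  "f_poly n = monom 1 n * [:-2, 1:] - [:2:]"

definition g_poly :: "nat \<Rightarrow> rat poly" where
  "g_poly n = monom 1 n * [:-2, 1:] + [:2:]"

text \<open>A polynomial over a field is separable iff it is coprime to its formal derivative
  (equivalently, it has no repeated root in an algebraic closure).\<close>
definition separable :: "'a::field poly \<Rightarrow> bool" where
  "separable p \<longleftrightarrow> coprime p (pderiv p)"

end

theory Submission imports Defs "Berlekamp_Zassenhaus.Factor_Bound" begin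
hide_const (open) UnivPoly.coeff UnivPoly.monom Square_Free_Factorization.separable

definition P :: "'a::comm_ring_1 \<Rightarrow> nat \<Rightarrow> 'a poly" where
  "P c n = Polynomial.monom 1 n * [:-2, 1:] + [:c:]"

lemma coeff_P:
  assumes "n \<ge> 1"
  shows "coeff (P c n) i = (if i = Suc n then 1 else if i = n then -2 else if i = 0 then c else 0)"
  using assms by (cases "i - n") (auto simp: P_def coeff_monom_mult coeff_pCons split: nat.splits)

lemma degree_P:
  assumes "n \<ge> 1"
  shows "degree (P (c::'a::{comm_ring_1,ring_char_0}) n) = Suc n"
proof (rule antisym)
  show "degree (P c n) \<le> Suc n"
    by (rule degree_le) (use assms in \<open>auto simp: coeff_P\<close>)
  show "Suc n \<le> degree (P c n)"
    by (rule le_degree) (use assms in \<open>auto simp: coeff_P\<close>)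
qed

lemma eis_aux:
  fixes F A B :: "int poly"
  assumes FAB: "F = A * B" and lc: "lead_coeff F = 1"
    and ev: "\<forall>i<degree F. even (coeff F i)"
    and dA: "degree A > 0" and dB: "degree B > 0"
    and a0: "even (coeff A 0)" and b0: "odd (coeff B 0)"
  shows False
proof -
  have A0: "A \<noteq> 0" and B0: "B \<noteq> 0" using dA dB by auto
  have dF: "degree F = degree A + degree B" using FAB A0 B0 by (simp add: degree_mult_eq)
  have "lead_coeff A * lead_coeff B = 1" using FAB lc by (simp add: lead_coeff_mult)
  hence oA: "odd (lead_coeff A)" by (metis dvd_mult2 odd_one)
  define k where "k = (LEAST i. odd (coeff A i))"
  have ok: "odd (coeff A k)" unfolding k_def by (rule LeastI[of _ "degree A"]) (rule oA)
  have evk: "\<And>i. i < k \<Longrightarrow> even (coeff A i)" unfolding k_def using not_less_Least by blast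
  have kle: "k \<le> degree A" unfolding k_def by (rule Least_le) (rule oA)
  have k0: "k \<noteq> 0"
  proof
    assume "k = 0" with ok a0 show False by simp
  qed
  have kF: "k < degree F" using kle dF dB by simp
  have "coeff F k = (\<Sum>i\<le>k. coeff A i * coeff B (k - i))" using FAB by (simp add: coeff_mult)
  also have "\<dots> = (\<Sum>i<k. coeff A i * coeff B (k - i)) + coeff A k * coeff B 0"
    by (simp add: lessThan_Suc_atMost[symmetric])
  finally have eq: "coeff F k = (\<Sum>i<k. coeff A i * coeff B (k - i)) + coeff A k * coeff B 0" .
  have "even (\<Sum>i<k. coeff A i * coeff B (k - i))"
    by (rule dvd_sum) (use evk in auto)
  moreover have "odd (coeff A k * coeff B 0)" using ok b0 by simp
  ultimately have "odd (coeff F k)" using eq by simp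
  with ev kF show False by blast
qed

lemma eis:
  fixes F :: "int poly"
  assumes lc: "lead_coeff F = 1" and dF: "degree F > 0"
    and ev: "\<forall>i<degree F. even (coeff F i)"
    and c0: "\<not> 4 dvd coeff F 0"
  shows "irreducible\<^sub>d F"
proof (rule irreducible\<^sub>dI)
  show "degree F > 0" by fact
  fix q r assume dq: "degree q > 0" "degree q < degree F" and dr: "degree r > 0" "degree r < degree F"
    and Fqr: "F = q * r"
  have c: "coeff F 0 = coeff q 0 * coeff r 0" using Fqr by (simp add: coeff_mult_0)
  have e0: "even (coeff F 0)" using ev dF by auto
  show False
  proof (cases "even (coeff q 0)")
    case True
    have "odd (coeff r 0)"
    proof
      assume "even (coeff r 0)"
      then have "4 dvd coeff q 0 * coeff r 0" using True by (auto elim!: evenE)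
      with c c0 show False by simp
    qed
    then show False using eis_aux[OF Fqr lc ev dq(1) dr(1) True] by simp
  next
    case False
    then have "even (coeff r 0)" using e0 c by simp
    moreover have "F = r * q" using Fqr by (simp add: mult.commute)
    ultimately show False using eis_aux[of F r q] lc ev dq dr False by simp
  qed
qed

lemma irr_P:
  assumes n: "n \<ge> 1" and c: "c = 2 \<or> c = -2"
  shows "irreducible (map_poly rat_of_int (P c n))"
proof -
  have "irreducible\<^sub>d (P c n)"
  proof (rule eis)
    show "lead_coeff (P c n) = 1" using n by (simp add: degree_P coeff_P)
    show "degree (P c n) > 0" using n by (simp add: degree_P)
    show "\<forall>i<degree (P c n). even (coeff (P c n) i)" using n c by (auto simp: degree_P coeff_P)
    show "\<not> 4 dvd coeff (P c n) 0" using n c by (auto simp: coeff_P)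
  qed
  from irreducible\<^sub>d_int_rat[OF this] show ?thesis by simp
qed

lemma P_rat:
  assumes n: "n \<ge> 1"
  shows "map_poly rat_of_int (P c n) = P (rat_of_int c) n"
  using n by (simp add: poly_eq_iff coeff_map_poly coeff_P)

lemma f_P: "f_poly n = P (-2) n" by (simp add: f_poly_def P_def)
lemma g_P: "g_poly n = P 2 n" by (simp add: g_poly_def P_def)

lemma irr_sep:
  fixes p :: "rat poly"
  assumes irr: "irreducible p"
  shows "separable p"
  unfolding Defs.separable_def
proof (rule algebraic_semidom_class.coprimeI)
  have "p \<noteq> 0" using irr by auto
  have dp: "degree p > 0"
  proof (rule ccontr)
    assume "\<not> degree p > 0"
    then have "is_unit p" using \<open>p \<noteq> 0\<close> by (simp add: is_unit_iff_degree)
    with irr show False by auto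
  qed
  have pd0: "pderiv p \<noteq> 0" using dp by (simp add: pderiv_eq_0_iff)
  fix c assume cp: "c dvd p" and cd: "c dvd pderiv p"
  from cp obtain e where pe: "p = c * e" by (auto elim: dvdE)
  from irreducibleD[OF irr pe] show "is_unit c"
  proof
    assume "is_unit e"
    then have "p dvd pderiv p" using cd pe by (metis mult_unit_dvd_iff)
    from dvd_imp_degree_le[OF this pd0] have "degree p \<le> degree (pderiv p)" .
    with dp show "is_unit c" by (simp add: degree_pderiv)
  qed
qed

theorem lemma8:
  fixes n :: nat
  assumes "n \<ge> 1"
  shows "irreducible (f_poly n) \<and> irreducible (g_poly n)
    \<and> separable (f_poly n) \<and> separable (g_poly n)
    \<and> poly (f_poly n) 0 \<noteq> 0 \<and> poly (g_poly n) 0 \<noteq> 0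
    \<and> (\<nexists>z::complex. poly (map_poly of_rat (f_poly n)) z = 0
                     \<and> poly (map_poly of_rat (g_poly n)) z = 0)"
proof -
  have irf: "irreducible (f_poly n)"
    using irr_P[OF assms, of "-2"] P_rat[OF assms, of "-2"] by (simp add: f_P)
  have irg: "irreducible (g_poly n)"
    using irr_P[OF assms, of "2"] P_rat[OF assms, of "2"] by (simp add: g_P)
  have f0: "poly (f_poly n) 0 \<noteq> 0" using assms by (simp add: f_poly_def poly_monom zero_power)
  have g0: "poly (g_poly n) 0 \<noteq> 0" using assms by (simp add: g_poly_def poly_monom zero_power)
  have fg: "f_poly n = g_poly n - [:4:]" by (simp add: f_poly_def g_poly_def)
  have m: "map_poly (of_rat :: rat \<Rightarrow> complex) (f_poly n) = map_poly of_rat (g_poly n) - [:4:]"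
    unfolding fg by (simp add: poly_eq_iff coeff_map_poly of_rat_diff coeff_pCons split: nat.splits)
  have nc: "\<nexists>z::complex. poly (map_poly of_rat (f_poly n)) z = 0
                     \<and> poly (map_poly of_rat (g_poly n)) z = 0"
    unfolding m by simp
  show ?thesis using irf irg irr_sep[OF irf] irr_sep[OF irg] f0 g0 nc by blast
qed
end
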